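(* For $u\in\mathbb{Z}_n$ and $j\in\mathbb{Z}_n$ set $E_{u,j}=\sum_{v=0}^{n/d-1}e_{j+vd}E_u$. Then for $j,\ell\in\{0,\dots,d-1\}$ we have $E_{u,j}E_{u,\ell}=\delta_{j\ell}E_{u,j}$, $\sum_{j=0}^{d-1}E_{u,j}=E_u$, and $E_{u,j}=E_{u,j'}$ if and only if $j\equiv j'\pmod d$. Moreover, in $\Gamma_u=\mathcal{D}(\Lambda_{n,d})E_u$: $$GE_{u,j}=q^{u+j}E_{u,j}=E_{u,j}G,\qquad XE_{u,j}=E_{u,j-1}X,$$ and $\gamma_\ell^mE_{u,j}=E_{u,j+m}\gamma_\ell^m$ if $\ell\equiv j\pmod d$, while $\gamma_\ell^mE_{u,j}=0$ otherwise.
   Context: $k$ is an algebraically closed field; $n,d$ integers with $d\geqslant2$, $d\mid n$, $\mathrm{char}\,k\nmid n$; $q$ a primitive $d$-th root of unity. $\Lambda_{n,d}$ is the path algebra of the cyclic quiver with vertices $e_i$ and arrows $a_i:e_i\to e_{i+1}$ ($i\in\mathbb{Z}_n$) modulo all paths of length $d$; $\gamma_i^m=a_{i+m-1}\cdots a_i$, $\gamma_i^0=e_i$. $\mathcal{D}(\Lambda_{n,d})$ is the Drinfel'd double of the Hopf algebra $\Lambda_{n,d}$; concretely it has basis $G^iX^j\gamma_\ell^m$ ($i,\ell\in\mathbb{Z}_n$, $0\leqslant j,m\leqslant d-1$) and is generated by $G,X,e_i,a_i$ with relations $G^n=1$, $X^d=0$, $GX=q^{-1}XG$, products of paths as in $\Lambda_{n,d}$,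 $\gamma_\ell^mG=q^{-m}G\gamma_\ell^m$, $\gamma_\ell^mX=q^{-m}X\gamma_{\ell+1}^m-q^{-m}(m)_q\gamma_{\ell+1}^{m-1}+q^{\ell+1-m}(m)_qG\gamma_{\ell+1}^{m-1}$, with $(m)_q=1+q+\cdots+q^{m-1}$. $E_u=\frac1n\sum_{i,j\in\mathbb{Z}_n}q^{-i(u+j)}G^ie_j$; these are central orthogonal idempotents summing to $1$. *)

theory Defs
  imports "HOL-Computational_Algebra.Polynomial"
begin

text \<open>Concrete model of the Drinfel'd double D(Lambda_{n,d}): a ring 'a together with
  a central embedding emb of the ground field 'k (so 'a is a 'k-algebra), and elements
  G, X, e_i, a_i (indices in Z_n represented by integers, functions periodic mod n)
  satisfying the defining relations, such that the monomials G^i X^j gamma_l^m form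
  a 'k-basis.\<close>

text \<open>q to an integer power, for q a d-th root of unity.\<close>
definition qp :: "nat \<Rightarrow> 'k::field \<Rightarrow> int \<Rightarrow> 'k" where
  "qp d q z = q ^ nat (z mod int d)"

definition qint :: "'k::field \<Rightarrow> nat \<Rightarrow> 'k" where
  "qint q m = (\<Sum>t<m. q ^ t)"

fun gam :: "(int \<Rightarrow> 'a::ring_1) \<Rightarrow> (int \<Rightarrow> 'a) \<Rightarrow> int \<Rightarrow> nat \<Rightarrow> 'a" where
  "gam a e l 0 = e l"
| "gam a e l (Suc m) = a (l + int m) * gam a e l m"

definition is_DD :: "nat \<Rightarrow> nat \<Rightarrow> 'k::field \<Rightarrow> ('k \<Rightarrow> 'a::ring_1) \<Rightarrow> 'a \<Rightarrow> 'a
    \<Rightarrow> (int \<Rightarrow> 'a) \<Rightarrow> (int \<Rightarrow> 'a) \<Rightarrow> bool" where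
  "is_DD n d q emb G X e a \<longleftrightarrow>
     \<comment> \<open>emb makes 'a a 'k-algebra\<close>
     emb 0 = 0 \<and> emb 1 = 1 \<and> (\<forall>x y. emb (x + y) = emb x + emb y)
     \<and> (\<forall>x y. emb (x * y) = emb x * emb y) \<and> (\<forall>c z. emb c * z = z * emb c)
     \<comment> \<open>indices in Z_n\<close>
     \<and> (\<forall>i. e (i + int n) = e i) \<and> (\<forall>i. a (i + int n) = a i)
     \<comment> \<open>path algebra of the cyclic quiver modulo paths of length d\<close>
     \<and> (\<forall>i j. e i * e j = (if i mod int n = j mod int n then e i else 0))
     \<and> (\<Sum>i<n. e (int i)) = 1
     \<and> (\<forall>i. a i = e (i + 1) * a i * e i)
     \<and> (\<forall>i. gam a e i d = 0)
     \<comment> \<open>relations involving G and X\<close>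
     \<and> G ^ n = 1 \<and> X ^ d = 0
     \<and> G * X = emb (qp d q (-1)) * X * G
     \<and> (\<forall>l m. m < d \<longrightarrow> gam a e l m * G = emb (qp d q (- int m)) * G * gam a e l m)
     \<and> (\<forall>l m. m < d \<longrightarrow> gam a e l m * X =
           emb (qp d q (- int m)) * X * gam a e (l + 1) m
         - emb (qp d q (- int m) * qint q m) * gam a e (l + 1) (m - 1)
         + emb (qp d q (l + 1 - int m) * qint q m) * G * gam a e (l + 1) (m - 1))
     \<comment> \<open>the monomials G^i X^j gamma_l^m (i,l < n, j,m < d) form a 'k-basis\<close>
     \<and> (let I = {0..<n} \<times> {0..<d} \<times> {0..<n} \<times> {0..<d};
            mono = (\<lambda>(i, j, l, m). G ^ i * X ^ j * gam a e (int l) m)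
        in (\<forall>z. \<exists>c. z = (\<Sum>t\<in>I. emb (c t) * mono t))
         \<and> (\<forall>c. (\<Sum>t\<in>I. emb (c t) * mono t) = 0 \<longrightarrow> (\<forall>t\<in>I. c t = 0)))"

definition Eid :: "nat \<Rightarrow> nat \<Rightarrow> 'k::field \<Rightarrow> ('k \<Rightarrow> 'a::ring_1) \<Rightarrow> 'a
    \<Rightarrow> (int \<Rightarrow> 'a) \<Rightarrow> int \<Rightarrow> 'a" where
  "Eid n d q emb G e u =
     (\<Sum>i<n. \<Sum>j<n. emb (inverse (of_nat n) * qp d q (- (int i * (u + int j)))) * G ^ i * e (int j))"

definition Eidj :: "nat \<Rightarrow> nat \<Rightarrow> 'k::field \<Rightarrow> ('k \<Rightarrow> 'a::ring_1) \<Rightarrow> 'a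
    \<Rightarrow> (int \<Rightarrow> 'a) \<Rightarrow> int \<Rightarrow> int \<Rightarrow> 'a" where
  "Eidj n d q emb G e u j = (\<Sum>v<n div d. e (j + int v * int d) * Eid n d q emb G e u)"

end

theory Submission
  imports Defs
begin


lemma periodic_mult:
  fixes g :: "int \<Rightarrow> 'b"
  assumes "\<And>w. g (w + p) = g w"
  shows "g (w + z * p) = g w"
proof -
  have nat_case: "g (w + int k * p) = g w" for w k
  proof (induct k)
    case 0 then show ?case by simp
  next
    case (Suc k)
    have "g (w + int (Suc k) * p) = g ((w + int k * p) + p)" by (simp add: algebra_simps)
    also have "\<dots> = g (w + int k * p)" by (rule assms)
    finally show ?case using Suc by simp
  qed
  show ?thesis
  proof (cases "z \<ge> 0")
    case True
    then show ?thesis using nat_case[of w "nat z"] by simp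
  next
    case False
    then have "g (w + z * p + int (nat (- z)) * p) = g (w + z * p)" by (rule_tac nat_case)
    then show ?thesis using False by (simp add: algebra_simps)
  qed
qed

lemma periodic_mod:
  fixes g :: "int \<Rightarrow> 'b"
  assumes "\<And>w. g (w + p) = g w" and "w mod p = w' mod p"
  shows "g w = g w'"
proof -
  have "p dvd w - w'" using assms(2) by (simp add: mod_eq_dvd_iff)
  then obtain k where "w - w' = p * k" by (auto elim: dvdE)
  then have "w = w' + k * p" by (simp add: algebra_simps)
  then show ?thesis using periodic_mult[of g p w' k, OF assms(1)] by simp
qed

lemma sum_shift_periodic:
  fixes h :: "nat \<Rightarrow> 'b::ab_group_add"
  assumes "h N = h 0"
  shows "(\<Sum>i<N. h (Suc i)) = (\<Sum>i<N. h i)"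
proof -
  have "(\<Sum>i<Suc N. h i) = h 0 + (\<Sum>i<N. h (Suc i))" by (rule sum.lessThan_Suc_shift)
  moreover have "(\<Sum>i<Suc N. h i) = (\<Sum>i<N. h i) + h N" by simp
  ultimately have "h 0 + (\<Sum>i<N. h (Suc i)) = h 0 + (\<Sum>i<N. h i)" using assms by (simp add: add.commute)
  then show ?thesis by (rule add_left_imp_eq)
qed

lemma sum_shift_int:
  fixes g :: "int \<Rightarrow> 'b::ab_group_add"
  assumes per: "\<And>w. g (w + int N) = g w"
  shows "(\<Sum>v<N. g (int v + t)) = (\<Sum>v<N. g (int v))"
proof -
  have nat_case: "(\<Sum>v<N. g (int v + int k)) = (\<Sum>v<N. g (int v))" for k
  proof (induct k)
    case 0 then show ?case by simp
  next
    case (Suc k)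
    have "(\<Sum>v<N. g (int v + int (Suc k))) = (\<Sum>v<N. (\<lambda>i. g (int i + int k)) (Suc v))"
      by (simp add: algebra_simps)
    also have "\<dots> = (\<Sum>v<N. g (int v + int k))"
      by (rule sum_shift_periodic) (simp add: per[of "int k", simplified add.commute] add.commute)
    finally show ?case using Suc by simp
  qed
  show ?thesis
  proof (cases "N = 0")
    case True then show ?thesis by simp
  next
    case False
    have "g (int v + t) = g (int v + int (nat (t mod int N)))" for v
    proof (rule periodic_mod[of g "int N"])
      show "g (w + int N) = g w" for w by (rule per)
      have "int (nat (t mod int N)) = t mod int N" using False by simp
      then show "(int v + t) mod int N = (int v + int (nat (t mod int N))) mod int N"
        by (simp only: mod_add_right_eq)
    qed
    then have "(\<Sum>v<N. g (int v + t)) = (\<Sum>v<N. g (int v + int (nat (t mod int N))))" by simp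
    then show ?thesis by (simp only: nat_case)
  qed
qed




locale dd =
  fixes n d :: nat and q :: "'k::field" and emb :: "'k \<Rightarrow> 'a::ring_1"
    and G X :: 'a and e a :: "int \<Rightarrow> 'a"
  assumes d2: "d \<ge> 2" and ddvd: "d dvd n" and nnz: "of_nat n \<noteq> (0::'k)" and qd: "q ^ d = 1"
    and emb0: "emb 0 = 0" and emb1: "emb 1 = 1"
    and embadd: "\<And>x y. emb (x + y) = emb x + emb y"
    and embmult: "\<And>x y. emb (x * y) = emb x * emb y"
    and embc: "\<And>c z. emb c * z = z * emb c"
    and eper: "\<And>i. e (i + int n) = e i"
    and ee: "\<And>i j. e i * e j = (if i mod int n = j mod int n then e i else 0)"
    and ae: "\<And>i. a i = e (i + 1) * a i * e i"
    and Gn: "G ^ n = 1"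
    and GX: "G * X = emb (qp d q (-1)) * X * G"
    and gamG: "\<And>l m. m < d \<Longrightarrow> gam a e l m * G = emb (qp d q (- int m)) * G * gam a e l m"
    and gamX: "\<And>l m. m < d \<Longrightarrow> gam a e l m * X =
           emb (qp d q (- int m)) * X * gam a e (l + 1) m
         - emb (qp d q (- int m) * qint q m) * gam a e (l + 1) (m - 1)
         + emb (qp d q (l + 1 - int m) * qint q m) * G * gam a e (l + 1) (m - 1)"
    and indep: "\<And>c. (\<Sum>t\<in>{0..<n} \<times> {0..<d} \<times> {0..<n} \<times> {0..<d}. emb (c t) *
                 (\<lambda>(i, j, l, m). G ^ i * X ^ j * gam a e (int l) m) t) = 0
        \<Longrightarrow> (\<forall>t\<in>{0..<n} \<times> {0..<d} \<times> {0..<n} \<times> {0..<d}. c t = 0)"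
begin

abbreviation "Q \<equiv> qp d q"

lemma dpos: "d > 0" using d2 by simp
lemma npos: "n > 0" using nnz by (cases n) auto

lemma qpow_mod: "q ^ k = q ^ (k mod d)"
proof -
  have "q ^ k = q ^ (d * (k div d) + k mod d)" by simp
  also have "\<dots> = (q ^ d) ^ (k div d) * q ^ (k mod d)" by (simp only: power_add power_mult)
  finally show ?thesis using qd by simp
qed

lemma Q_nat: "Q (int k) = q ^ k"
proof -
  have "int k mod int d = int (k mod d)" by (simp add: of_nat_mod)
  then show ?thesis unfolding qp_def by (simp add: qpow_mod[symmetric])
qed

lemma Q_cong: "int d dvd z - w \<Longrightarrow> Q z = Q w"
proof -
  assume "int d dvd z - w"
  then have "z mod int d = w mod int d" by (simp add: mod_eq_dvd_iff)
  then show ?thesis unfolding qp_def by simp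
qed

lemma Q_add: "Q (z + w) = Q z * Q w"
proof -
  let ?A = "nat (z mod int d)" and ?B = "nat (w mod int d)"
  have za: "int ?A = z mod int d" and wb: "int ?B = w mod int d" using dpos by simp_all
  have qz: "Q z = q ^ ?A" "Q w = q ^ ?B" by (simp_all add: qp_def)
  have "(z + w) mod int d = int (?A + ?B) mod int d"
    by (simp only: of_nat_add za wb mod_add_eq)
  then have "int d dvd z + w - int (?A + ?B)" by (simp only: mod_eq_dvd_iff)
  then have "Q (z + w) = Q (int (?A + ?B))" by (rule Q_cong)
  also have "\<dots> = q ^ ?A * q ^ ?B" by (simp only: Q_nat power_add)
  finally show ?thesis by (simp only: qz)
qed

lemma Q0: "Q 0 = 1" by (simp add: qp_def)
lemma Q1: "Q 1 = q" using d2 by (simp add: qp_def)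

lemma Q_pow: "Q z ^ i = Q (z * int i)"
  by (induct i) (simp_all add: Q0 Q_add[symmetric] algebra_simps)

lemma emb_sum: "emb (\<Sum>i\<in>A. f i) = (\<Sum>i\<in>A. emb (f i))"
  by (induct A rule: infinite_finite_induct) (simp_all add: emb0 embadd)

lemma emb_of_nat: "emb (of_nat k) = of_nat k"
  by (induct k) (simp_all add: emb0 emb1 embadd)

lemma emb_pow: "emb (x ^ k) = emb x ^ k"
  by (induct k) (simp_all add: emb1 embmult)

lemma embc2: "z * (emb c * w) = emb c * (z * w)"
proof -
  have "z * emb c = emb c * z" by (rule embc[symmetric])
  then show ?thesis by (simp add: mult.assoc[symmetric])
qed

lemma e_per: "w mod int n = w' mod int n \<Longrightarrow> e w = e w'"
  by (rule periodic_mod[of e "int n"]) (simp_all add: eper)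

lemma eG: "e k * G = G * e k"
proof -
  have "gam a e k 0 * G = emb (Q (- int 0)) * G * gam a e k 0" using dpos by (intro gamG)
  then show ?thesis by (simp add: Q0 emb1)
qed

lemma eGp: "e k * G ^ i = G ^ i * e k"
proof (induct i)
  case 0 then show ?case by simp
next
  case (Suc i)
  have "e k * G ^ Suc i = (e k * G ^ i) * G" by (simp only: power_Suc2 mult.assoc)
  also have "\<dots> = G ^ i * (e k * G)" by (simp add: Suc mult.assoc)
  also have "\<dots> = G ^ i * G * e k" by (simp only: eG mult.assoc)
  also have "\<dots> = G ^ Suc i * e k" by (simp only: power_Suc2)
  finally show ?case .
qed

lemma eX: "e l * X = X * e (l + 1)"
proof -
  have "gam a e l 0 * X = emb (Q (- int 0)) * X * gam a e (l + 1) 0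
         - emb (Q (- int 0) * qint q 0) * gam a e (l + 1) (0 - 1)
         + emb (Q (l + 1 - int 0) * qint q 0) * G * gam a e (l + 1) (0 - 1)"
    using dpos by (intro gamX)
  then show ?thesis by (simp add: Q0 emb1 emb0 qint_def)
qed

lemma XG: "X * G = emb q * G * X"
proof -
  have "emb q * G * X = emb q * (G * X)" by (simp add: mult.assoc)
  also have "\<dots> = emb q * emb (Q (-1)) * X * G" by (simp add: GX mult.assoc)
  also have "\<dots> = emb (Q 1 * Q (-1)) * X * G" by (simp add: embmult Q1)
  also have "\<dots> = X * G" by (simp add: Q_add[symmetric] Q0 emb1)
  finally show ?thesis by simp
qed

lemma XGp: "X * G ^ i = emb (q ^ i) * G ^ i * X"
proof (induct i)
  case 0 then show ?case by (simp add: emb1)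
next
  case (Suc i)
  have "X * G ^ Suc i = (X * G ^ i) * G" by (simp only: power_Suc2 mult.assoc)
  also have "\<dots> = emb (q ^ i) * G ^ i * (X * G)" by (simp add: Suc mult.assoc)
  also have "\<dots> = emb (q ^ i) * G ^ i * (emb q * G * X)" by (simp add: XG)
  also have "\<dots> = emb (q ^ i) * emb q * (G ^ i * G) * X"
    by (simp add: mult.assoc embc2[of "G ^ i"])
  also have "\<dots> = emb (q ^ Suc i) * G ^ Suc i * X"
    by (simp only: embmult[symmetric] power_Suc2)
  finally show ?case .
qed

lemma ea: "e (i + 1) * a i = a i"
proof -
  have "e (i + 1) * a i = e (i + 1) * (e (i + 1) * a i * e i)" by (subst ae) simp
  also have "\<dots> = e (i + 1) * a i * e i" by (simp add: mult.assoc[symmetric] ee)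
  also have "\<dots> = a i" by (rule ae[symmetric])
  finally show ?thesis .
qed

lemma gam_right: "gam a e l m * e l = gam a e l m"
  by (induct m) (simp_all add: ee mult.assoc)

lemma gam_left: "e (l + int m) * gam a e l m = gam a e l m"
proof (induct m)
  case 0 then show ?case by (simp add: ee)
next
  case (Suc m)
  have "e (l + int (Suc m)) * gam a e l (Suc m) = (e (l + int m + 1) * a (l + int m)) * gam a e l m"
  proof -
    have "l + int (Suc m) = l + int m + 1" by simp
    then show ?thesis by (simp only: gam.simps mult.assoc)
  qed
  also have "\<dots> = gam a e l (Suc m)" by (simp add: ea)
  finally show ?case .
qed

lemma gam_e: "gam a e l m * e k = (if k mod int n = l mod int n then gam a e l m else 0)"
proof -
  have "gam a e l m * e k = gam a e l m * (e l * e k)"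
    by (subst gam_right[symmetric]) (simp add: mult.assoc)
  also have "\<dots> = gam a e l m * (if l mod int n = k mod int n then e l else 0)"
    by (simp only: ee)
  finally show ?thesis by (auto simp: gam_right)
qed

lemma e_gam: "e k * gam a e l m = (if k mod int n = (l + int m) mod int n then gam a e l m else 0)"
proof -
  have "e k * gam a e l m = (e k * e (l + int m)) * gam a e l m"
    by (subst gam_left[symmetric]) (simp add: mult.assoc)
  also have "\<dots> = (if k mod int n = (l + int m) mod int n then e k else 0) * gam a e l m"
    by (simp only: ee)
  finally show ?thesis
    using e_per[of k "l + int m"] by (auto simp: gam_left)
qed

lemma gamGp: "m < d \<Longrightarrow> gam a e l m * G ^ i = emb (Q (- int m) ^ i) * G ^ i * gam a e l m"
proof (induct i)
  case 0 then show ?case by (simp add: emb1)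
next
  case (Suc i)
  have "gam a e l m * G ^ Suc i = (gam a e l m * G ^ i) * G" by (simp only: power_Suc2 mult.assoc)
  also have "\<dots> = emb (Q (- int m) ^ i) * G ^ i * (gam a e l m * G)" using Suc by (simp add: mult.assoc)
  also have "\<dots> = emb (Q (- int m) ^ i) * G ^ i * (emb (Q (- int m)) * G * gam a e l m)"
    using Suc by (simp add: gamG)
  also have "\<dots> = emb (Q (- int m) ^ i) * emb (Q (- int m)) * (G ^ i * G) * gam a e l m"
    by (simp add: mult.assoc embc2[of "G ^ i"])
  also have "\<dots> = emb (Q (- int m) ^ Suc i) * G ^ Suc i * gam a e l m"
    by (simp only: embmult[symmetric] power_Suc2)
  finally show ?case .
qed

end



context dd begin

definition cc :: "int \<Rightarrow> int \<Rightarrow> nat \<Rightarrow> 'k" where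
  "cc u k i = inverse (of_nat n) * Q (- (int i * (u + k)))"

definition P :: "int \<Rightarrow> int \<Rightarrow> 'a" where
  "P u k = (\<Sum>i<n. emb (cc u k i) * G ^ i)"

definition F :: "int \<Rightarrow> int \<Rightarrow> 'a" where
  "F u k = P u k * e k"

lemma Q_mul: "A + B = C \<Longrightarrow> Q A * Q B = Q C"
proof -
  assume h: "A + B = C"
  show ?thesis by (simp only: Q_add[symmetric] h)
qed

lemma cc_cong: "int d dvd k - k' \<Longrightarrow> cc u k i = cc u k' i"
proof -
  assume "int d dvd k - k'"
  then obtain t where t: "k - k' = int d * t" by (auto elim: dvdE)
  have "- (int i * (u + k)) - - (int i * (u + k')) = int d * (- (int i * t))"
    using t by (simp add: algebra_simps)
  then have "int d dvd - (int i * (u + k)) - - (int i * (u + k'))" by simp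
  then show ?thesis unfolding cc_def by (simp add: Q_cong[of "- (int i * (u + k))"])
qed

lemma P_cong: "int d dvd k - k' \<Longrightarrow> P u k = P u k'"
  unfolding P_def by (simp add: cc_cong[of k k'])

lemma dvd_n_d: "k mod int n = k' mod int n \<Longrightarrow> int d dvd k - k'"
proof -
  assume "k mod int n = k' mod int n"
  then have "int n dvd k - k'" by (simp add: mod_eq_dvd_iff)
  moreover have "int d dvd int n" using ddvd by simp
  ultimately show ?thesis by (rule dvd_trans[rotated])
qed

lemma P_modn: "k mod int n = k' mod int n \<Longrightarrow> P u k = P u k'"
  by (rule P_cong) (rule dvd_n_d)

lemma F_modn: "k mod int n = k' mod int n \<Longrightarrow> F u k = F u k'"
proof -
  assume h: "k mod int n = k' mod int n"
  show ?thesis unfolding F_def using P_modn[OF h, of u] e_per[OF h] by simp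
qed

lemma eP: "e j * P u k = P u k * e j"
proof -
  have "e j * P u k = (\<Sum>i<n. e j * (emb (cc u k i) * G ^ i))"
    unfolding P_def by (simp add: sum_distrib_left)
  also have "\<dots> = (\<Sum>i<n. emb (cc u k i) * G ^ i * e j)"
    by (simp only: embc2[of "e j"] eGp mult.assoc)
  also have "\<dots> = P u k * e j"
    unfolding P_def by (simp add: sum_distrib_right)
  finally show ?thesis .
qed

lemma cc_shift: "Q (u + k) * cc u k (Suc i) = cc u k i"
proof -
  have "Q (u + k) * cc u k (Suc i) = inverse (of_nat n) * (Q (u + k) * Q (- (int (Suc i) * (u + k))))"
    unfolding cc_def by (rule mult.left_commute)
  also have "\<dots> = inverse (of_nat n) * Q (u + k + - (int (Suc i) * (u + k)))"
    by (simp only: Q_add)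
  also have "u + k + - (int (Suc i) * (u + k)) = - (int i * (u + k))" by (simp add: algebra_simps)
  finally show ?thesis unfolding cc_def .
qed

lemma cc_n: "cc u k n = cc u k 0"
proof -
  have "Q (- (int n * (u + k))) = Q 0"
    by (rule Q_cong) (use ddvd in simp)
  then show ?thesis unfolding cc_def by simp
qed

lemma GP: "G * P u k = emb (Q (u + k)) * P u k"
proof -
  let ?h = "\<lambda>i. emb (cc u k i) * G ^ i"
  have hn: "?h n = ?h 0" using cc_n Gn by simp
  have "emb (Q (u + k)) * P u k = (\<Sum>i<n. emb (Q (u + k)) * ?h (Suc i))"
    unfolding P_def sum_shift_periodic[of ?h n, OF hn, symmetric] by (simp add: sum_distrib_left)
  also have "\<dots> = (\<Sum>i<n. G * ?h i)"
  proof (rule sum.cong[OF refl])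
    fix i
    have "emb (Q (u + k)) * ?h (Suc i) = emb (Q (u + k) * cc u k (Suc i)) * (G * G ^ i)"
      by (simp only: embmult mult.assoc power_Suc)
    also have "\<dots> = emb (cc u k i) * (G * G ^ i)" by (simp only: cc_shift)
    also have "\<dots> = G * ?h i" by (simp only: embc2[of G])
    finally show "emb (Q (u + k)) * ?h (Suc i) = G * ?h i" .
  qed
  also have "\<dots> = G * P u k" unfolding P_def by (simp add: sum_distrib_left)
  finally show ?thesis by simp
qed

lemma PG: "P u k * G = G * P u k"
proof -
  have "P u k * G = (\<Sum>i<n. emb (cc u k i) * (G ^ i * G))"
    unfolding P_def by (simp add: sum_distrib_right mult.assoc)
  also have "\<dots> = (\<Sum>i<n. G * (emb (cc u k i) * G ^ i))"
    by (simp only: power_commutes embc2[of G])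
  also have "\<dots> = G * P u k" unfolding P_def by (simp add: sum_distrib_left)
  finally show ?thesis .
qed

lemma GpP: "G ^ i * P u k = emb (Q (u + k) ^ i) * P u k"
proof (induct i)
  case 0 then show ?case by (simp add: emb1)
next
  case (Suc i)
  have "G ^ Suc i * P u k = G * (G ^ i * P u k)" by (simp add: mult.assoc)
  also have "\<dots> = G * (emb (Q (u + k) ^ i) * P u k)" by (simp only: Suc)
  also have "\<dots> = emb (Q (u + k) ^ i) * (G * P u k)" by (simp only: embc2[of G])
  also have "\<dots> = emb (Q (u + k) ^ i) * emb (Q (u + k)) * P u k" by (simp only: GP mult.assoc)
  also have "\<dots> = emb (Q (u + k) ^ Suc i) * P u k" by (simp only: embmult[symmetric] power_Suc2)
  finally show ?case .
qed

lemma PP: "P u k * P u k = P u k"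
proof -
  have "P u k * P u k = (\<Sum>i<n. emb (cc u k i) * (G ^ i * P u k))"
    unfolding P_def[of u k] by (simp add: sum_distrib_right mult.assoc)
  also have "\<dots> = (\<Sum>i<n. emb (cc u k i * Q (u + k) ^ i) * P u k)"
    by (simp only: GpP embmult mult.assoc)
  also have "\<dots> = (\<Sum>i<n. emb (inverse (of_nat n)) * P u k)"
  proof (rule sum.cong[OF refl])
    fix i
    have qm: "Q (- (int i * (u + k))) * Q ((u + k) * int i) = Q 0" by (rule Q_mul) (simp add: algebra_simps)
    have "cc u k i * Q (u + k) ^ i = inverse (of_nat n) * (Q (- (int i * (u + k))) * Q ((u + k) * int i))"
      unfolding cc_def Q_pow by (simp only: mult.assoc)
    also have "\<dots> = inverse (of_nat n)" by (simp only: qm Q0 mult_1_right)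
    finally show "emb (cc u k i * Q (u + k) ^ i) * P u k = emb (inverse (of_nat n)) * P u k" by simp
  qed
  also have "\<dots> = of_nat n * (emb (inverse (of_nat n)) * P u k)" by simp
  also have "\<dots> = emb (of_nat n * inverse (of_nat n)) * P u k"
    by (simp only: embmult emb_of_nat mult.assoc)
  also have "\<dots> = P u k" using nnz by (simp add: emb1)
  finally show ?thesis .
qed

lemma XP: "X * P u k = P u (k - 1) * X"
proof -
  have "X * P u k = (\<Sum>i<n. emb (cc u k i) * (X * G ^ i))"
    unfolding P_def by (simp add: sum_distrib_left embc2[of X])
  also have "\<dots> = (\<Sum>i<n. emb (cc u (k - 1) i) * G ^ i * X)"
  proof (rule sum.cong[OF refl])
    fix i
    have "cc u k i * q ^ i = cc u (k - 1) i"
    proof -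
      have qm: "Q (- (int i * (u + k))) * Q (int i) = Q (- (int i * (u + (k - 1))))"
        by (rule Q_mul) (simp add: algebra_simps)
      have "cc u k i * q ^ i = inverse (of_nat n) * (Q (- (int i * (u + k))) * Q (int i))"
        unfolding cc_def Q_nat[symmetric] by (simp only: mult.assoc)
      also have "\<dots> = cc u (k - 1) i" unfolding cc_def by (simp only: qm)
      finally show ?thesis .
    qed
    then show "emb (cc u k i) * (X * G ^ i) = emb (cc u (k - 1) i) * G ^ i * X"
      by (simp only: XGp embmult[symmetric] mult.assoc[symmetric])
  qed
  also have "\<dots> = P u (k - 1) * X" unfolding P_def by (simp add: sum_distrib_right)
  finally show ?thesis .
qed

lemma gamP: "m < d \<Longrightarrow> gam a e l m * P u k = P u (k + int m) * gam a e l m"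
proof -
  assume md: "m < d"
  have "gam a e l m * P u k = (\<Sum>i<n. emb (cc u k i) * (gam a e l m * G ^ i))"
    unfolding P_def by (simp add: sum_distrib_left embc2[of "gam a e l m"])
  also have "\<dots> = (\<Sum>i<n. emb (cc u (k + int m) i) * G ^ i * gam a e l m)"
  proof (rule sum.cong[OF refl])
    fix i
    have "cc u k i * Q (- int m) ^ i = cc u (k + int m) i"
    proof -
      have qm: "Q (- (int i * (u + k))) * Q (- int m * int i) = Q (- (int i * (u + (k + int m))))"
        by (rule Q_mul) (simp add: algebra_simps)
      have "cc u k i * Q (- int m) ^ i = inverse (of_nat n) * (Q (- (int i * (u + k))) * Q (- int m * int i))"
        unfolding cc_def Q_pow by (simp only: mult.assoc)
      also have "\<dots> = cc u (k + int m) i" unfolding cc_def by (simp only: qm)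
      finally show ?thesis .
    qed
    then show "emb (cc u k i) * (gam a e l m * G ^ i) = emb (cc u (k + int m) i) * G ^ i * gam a e l m"
      using md by (simp only: gamGp embmult[symmetric] mult.assoc[symmetric])
  qed
  also have "\<dots> = P u (k + int m) * gam a e l m" unfolding P_def by (simp add: sum_distrib_right)
  finally show ?thesis .
qed

end



context dd begin

lemma eF: "e j * F u k = (if j mod int n = k mod int n then F u k else 0)"
proof -
  have "e j * F u k = P u k * (e j * e k)" unfolding F_def by (simp only: eP mult.assoc[symmetric])
  also have "\<dots> = P u k * (if j mod int n = k mod int n then e j else 0)" by (simp only: ee)
  finally show ?thesis using e_per[of j k] unfolding F_def by auto
qed

lemma FF: "F u k * F u k' = (if k mod int n = k' mod int n then F u k else 0)"
proof -
  have "F u k * F u k' = P u k * ((e k * P u k') * e k')" unfolding F_def by (simp only: mult.assoc)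
  also have "\<dots> = P u k * ((P u k' * e k) * e k')" by (simp only: eP)
  also have "\<dots> = P u k * P u k' * (e k * e k')" by (simp only: mult.assoc)
  also have "\<dots> = P u k * P u k' * (if k mod int n = k' mod int n then e k else 0)" by (simp only: ee)
  finally show ?thesis using P_modn[of k k' u] unfolding F_def by (auto simp: PP)
qed

lemma GF: "G * F u k = emb (Q (u + k)) * F u k"
  unfolding F_def by (simp only: GP mult.assoc[symmetric])

lemma FG: "F u k * G = G * F u k"
proof -
  have "F u k * G = P u k * (e k * G)" unfolding F_def by (simp only: mult.assoc)
  also have "\<dots> = (P u k * G) * e k" by (simp only: eG mult.assoc)
  also have "\<dots> = G * F u k" unfolding F_def by (simp only: PG mult.assoc)
  finally show ?thesis .
qed

lemma XF: "X * F u k = F u (k - 1) * X"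
proof -
  have "X * F u k = P u (k - 1) * (X * e (k - 1 + 1))" unfolding F_def by (simp add: XP mult.assoc[symmetric])
  also have "\<dots> = F u (k - 1) * X" unfolding F_def by (simp only: eX[symmetric] mult.assoc)
  finally show ?thesis .
qed

lemma gamF: "m < d \<Longrightarrow> gam a e l m * F u k = (if k mod int n = l mod int n then P u (k + int m) * gam a e l m else 0)"
proof -
  assume md: "m < d"
  have "gam a e l m * F u k = P u (k + int m) * (gam a e l m * e k)"
    unfolding F_def using md by (simp only: gamP mult.assoc[symmetric])
  then show ?thesis by (simp add: gam_e)
qed

lemma Fgam: "F u k * gam a e l m = (if k mod int n = (l + int m) mod int n then P u k * gam a e l m else 0)"
proof -
  have "F u k * gam a e l m = P u k * (e k * gam a e l m)"
    unfolding F_def by (simp only: mult.assoc)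
  then show ?thesis by (simp add: e_gam)
qed

lemma Eid_F: "Eid n d q emb G e u = (\<Sum>j<n. F u (int j))"
  unfolding Eid_def F_def P_def cc_def sum_distrib_right by (rule sum.swap)

lemma eEid: "e k * Eid n d q emb G e u = F u k"
proof -
  have "e k * Eid n d q emb G e u = (\<Sum>j<n. e k * F u (int j))"
    by (simp add: Eid_F sum_distrib_left)
  also have "\<dots> = (\<Sum>j<n. if j = nat (k mod int n) then F u (int j) else 0)"
  proof (rule sum.cong[OF refl])
    fix j assume "j \<in> {..<n}"
    then have "int j mod int n = int j" by simp
    moreover have "k mod int n \<ge> 0" using npos by simp
    ultimately have "(k mod int n = int j mod int n) = (j = nat (k mod int n))" by auto
    then show "e k * F u (int j) = (if j = nat (k mod int n) then F u (int j) else 0)"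
      by (simp add: eF)
  qed
  also have "\<dots> = F u (int (nat (k mod int n)))"
  proof -
    have "nat (k mod int n) < n" using npos by (simp add: nat_less_iff)
    then show ?thesis by simp
  qed
  also have "\<dots> = F u k" using npos by (intro F_modn) simp
  finally show ?thesis .
qed

lemma Eidj_F: "Eidj n d q emb G e u j = (\<Sum>v<n div d. F u (j + int v * int d))"
  unfolding Eidj_def by (simp only: mult.assoc eEid)

lemma F_nonzero: "0 \<le> k \<Longrightarrow> k < int n \<Longrightarrow> F u k \<noteq> 0"
proof
  assume k0: "0 \<le> k" and kn: "k < int n" and F0: "F u k = 0"
  define K where "K = nat k"
  have Kn: "K < n" and kK: "int K = k" using k0 kn by (auto simp: K_def)
  define I where "I = {0..<n} \<times> {0..<d} \<times> {0..<n} \<times> {0..<d}"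
  define mono where "mono = (\<lambda>(i, j, l, m). G ^ i * X ^ j * gam a e (int l) m)"
  define C where "C = (\<lambda>(i::nat, j::nat, l::nat, m::nat). if j = 0 \<and> l = K \<and> m = 0 then cc u k i else 0)"
  define f where "f = (\<lambda>i::nat. (i, 0::nat, K, 0::nat))"
  have "(\<Sum>t\<in>I. emb (C t) * mono t) = (\<Sum>t\<in>f ` {0..<n}. emb (C t) * mono t)"
  proof (rule sum.mono_neutral_right)
    show "finite I" unfolding I_def by simp
    show "f ` {0..<n} \<subseteq> I" unfolding I_def f_def using Kn dpos by auto
    show "\<forall>t\<in>I - f ` {0..<n}. emb (C t) * mono t = 0"
    proof
      fix t assume t: "t \<in> I - f ` {0..<n}"
      obtain i j l m where tt: "t = (i, j, l, m)" by (cases t) auto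
      have "\<not> (j = 0 \<and> l = K \<and> m = 0)"
      proof
        assume "j = 0 \<and> l = K \<and> m = 0"
        then have "t = f i" unfolding f_def tt by simp
        moreover have "i < n" using t tt unfolding I_def by auto
        ultimately show False using t by auto
      qed
      then show "emb (C t) * mono t = 0" unfolding tt C_def by (auto simp: emb0)
    qed
  qed
  also have "\<dots> = (\<Sum>i\<in>{0..<n}. emb (C (f i)) * mono (f i))"
  proof -
    have inj: "inj_on f {0..<n}" by (auto simp: inj_on_def f_def)
    show ?thesis by (simp only: sum.reindex[OF inj] o_def)
  qed
  also have "\<dots> = (\<Sum>i<n. emb (cc u k i) * G ^ i * e k)"
    by (rule sum.cong) (auto simp: C_def f_def mono_def kK mult.assoc)
  also have "\<dots> = F u k" unfolding F_def P_def by (simp add: sum_distrib_right)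
  finally have "(\<Sum>t\<in>I. emb (C t) * mono t) = 0" using F0 by simp
  then have "\<forall>t\<in>I. C t = 0" unfolding I_def mono_def by (rule indep)
  moreover have "f 0 \<in> I" unfolding I_def f_def using Kn dpos npos by auto
  ultimately have "C (f 0) = 0" by blast
  then have "cc u k 0 = 0" unfolding C_def f_def by simp
  then show False using nnz unfolding cc_def by (simp add: Q0)
qed

end



context dd begin

lemma nN: "int n = int (n div d) * int d"
  using ddvd by (simp add: of_nat_mult[symmetric])

lemma Npos: "n div d > 0"
  using npos ddvd dpos by (auto elim!: dvdE)

lemma idx_bound: "0 \<le> j \<Longrightarrow> j < int d \<Longrightarrow> v < n div d \<Longrightarrow> 0 \<le> j + int v * int d \<and> j + int v * int d < int n"
proof -
  assume j0: "0 \<le> j" and jd: "j < int d" and v: "v < n div d"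
  have "(int v + 1) * int d \<le> int (n div d) * int d"
    using v by (intro mult_right_mono) auto
  then show ?thesis using j0 jd nN by (simp add: algebra_simps)
qed

lemma idx:
  assumes "0 \<le> j" "j < int d" "0 \<le> l" "l < int d" "v < n div d" "v' < n div d"
  shows "((j + int v * int d) mod int n = (l + int v' * int d) mod int n) = (j = l \<and> v = v')"
proof
  assume h: "(j + int v * int d) mod int n = (l + int v' * int d) mod int n"
  have b1: "0 \<le> j + int v * int d \<and> j + int v * int d < int n" using assms by (intro idx_bound)
  have b2: "0 \<le> l + int v' * int d \<and> l + int v' * int d < int n" using assms by (intro idx_bound)
  have eq: "j + int v * int d = l + int v' * int d"
    using h b1 b2 by (simp add: mod_pos_pos_trivial)
  then have "(j + int v * int d) mod int d = (l + int v' * int d) mod int d" by simp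
  then have "j mod int d = l mod int d" by simp
  then have jl: "j = l" using assms by (simp add: mod_pos_pos_trivial)
  then have "int v * int d = int v' * int d" using eq by simp
  then have "v = v'" using dpos by simp
  then show "j = l \<and> v = v'" using jl by simp
qed simp

lemma C1:
  assumes "0 \<le> j" "j < int d" "0 \<le> l" "l < int d"
  shows "Eidj n d q emb G e u j * Eidj n d q emb G e u l = (if j = l then Eidj n d q emb G e u j else 0)"
proof -
  have "Eidj n d q emb G e u j * Eidj n d q emb G e u l
      = (\<Sum>v<n div d. \<Sum>v'<n div d. F u (j + int v * int d) * F u (l + int v' * int d))"
    by (simp only: Eidj_F sum_product)
  also have "\<dots> = (\<Sum>v<n div d. \<Sum>v'<n div d. if j = l \<and> v = v' then F u (j + int v * int d) else 0)"
    by (intro sum.cong refl) (simp add: FF idx assms)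
  also have "\<dots> = (if j = l then Eidj n d q emb G e u j else 0)"
    by (cases "j = l") (simp_all add: Eidj_F)
  finally show ?thesis .
qed

lemma C2: "(\<Sum>j<d. Eidj n d q emb G e u (int j)) = Eid n d q emb G e u"
proof -
  have "(\<Sum>j<d. Eidj n d q emb G e u (int j)) = (\<Sum>j<d. \<Sum>v<n div d. F u (int (j + v * d)))"
    by (simp add: Eidj_F)
  also have "\<dots> = (\<Sum>v<n div d. \<Sum>j<d. F u (int (j + v * d)))" by (rule sum.swap)
  also have "\<dots> = (\<Sum>v<n div d. \<Sum>x\<in>{v * d..<v * d + d}. F u (int x))"
  proof (rule sum.cong[OF refl])
    fix v
    have "(\<Sum>x\<in>{0 + v * d..<d + v * d}. F u (int x)) = (\<Sum>j\<in>{0..<d}. F u (int (j + v * d)))"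
      by (rule sum.shift_bounds_nat_ivl)
    then show "(\<Sum>j<d. F u (int (j + v * d))) = (\<Sum>x\<in>{v * d..<v * d + d}. F u (int x))"
      by (simp add: atLeast0LessThan add.commute)
  qed
  also have "\<dots> = (\<Sum>x<n div d * d. F u (int x))" by (rule sum.nat_group)
  also have "\<dots> = Eid n d q emb G e u" using ddvd by (simp add: Eid_F)
  finally show ?thesis .
qed

lemma C3_if:
  assumes "j mod int d = j' mod int d"
  shows "Eidj n d q emb G e u j = Eidj n d q emb G e u j'"
proof -
  have red: "Eidj n d q emb G e u j = Eidj n d q emb G e u (j mod int d)" for j
  proof -
    define r where "r = j mod int d"
    define g where "g = (\<lambda>w. F u (r + w * int d))"
    have per: "g (w + int (n div d)) = g w" for w
      unfolding g_def
    proof (rule F_modn)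
      have "r + (w + int (n div d)) * int d = (r + w * int d) + int n" using nN by (simp add: algebra_simps)
      then show "(r + (w + int (n div d)) * int d) mod int n = (r + w * int d) mod int n"
        by (simp only: mod_add_self2)
    qed
    have "Eidj n d q emb G e u j = (\<Sum>v<n div d. g (int v + j div int d))"
    proof -
      have "j + int v * int d = r + (int v + j div int d) * int d" for v
        unfolding r_def by (simp add: algebra_simps)
      then show ?thesis unfolding g_def by (simp add: Eidj_F)
    qed
    also have "\<dots> = (\<Sum>v<n div d. g (int v))" by (rule sum_shift_int) (rule per)
    also have "\<dots> = Eidj n d q emb G e u r" unfolding g_def by (simp add: Eidj_F)
    finally show ?thesis unfolding r_def .
  qed
  show ?thesis using red[of j] red[of j'] assms by simp
qed

lemma C3_onlyif:
  assumes eq: "Eidj n d q emb G e u j = Eidj n d q emb G e u j'"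
  shows "j mod int d = j' mod int d"
proof (rule ccontr)
  assume ne: "j mod int d \<noteq> j' mod int d"
  define r where "r = j mod int d"
  define r' where "r' = j' mod int d"
  have r: "0 \<le> r" "r < int d" "0 \<le> r'" "r' < int d" using dpos by (simp_all add: r_def r'_def)
  have "Eidj n d q emb G e u r = Eidj n d q emb G e u r'"
    using eq C3_if[of j r u] C3_if[of j' r' u] by (simp add: r_def r'_def)
  then have "Eidj n d q emb G e u r = 0"
    using C1[OF r(1,2) r(1,2), of u] C1[OF r(1,2) r(3,4), of u] ne
    by (simp add: r_def r'_def)
  moreover have "e r * Eidj n d q emb G e u r = F u r"
  proof -
    have "e r * Eidj n d q emb G e u r = (\<Sum>v<n div d. e r * F u (r + int v * int d))"
      by (simp add: Eidj_F sum_distrib_left)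
    also have "\<dots> = (\<Sum>v<n div d. if 0 = v then F u (r + int v * int d) else 0)"
    proof (rule sum.cong[OF refl])
      fix v assume "v \<in> {..<n div d}"
      then have "v < n div d" by simp
      then have "(r mod int n = (r + int v * int d) mod int n) = (0 = v)"
        using idx[OF r(1,2) r(1,2) Npos] by simp
      then show "e r * F u (r + int v * int d) = (if 0 = v then F u (r + int v * int d) else 0)"
        by (simp add: eF)
    qed
    also have "\<dots> = F u r" using Npos by simp
    finally show ?thesis .
  qed
  moreover have "F u r \<noteq> 0"
  proof (rule F_nonzero)
    show "0 \<le> r" by (rule r)
    have "d \<le> n" using ddvd npos by (simp add: dvd_imp_le)
    then show "r < int n" using r by simp
  qed
  ultimately show False by simp
qed

lemma C4a: "G * Eidj n d q emb G e u j = emb (Q (u + j)) * Eidj n d q emb G e u j"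
proof -
  have "G * Eidj n d q emb G e u j = (\<Sum>v<n div d. emb (Q (u + (j + int v * int d))) * F u (j + int v * int d))"
    by (simp add: Eidj_F sum_distrib_left GF)
  also have "\<dots> = (\<Sum>v<n div d. emb (Q (u + j)) * F u (j + int v * int d))"
  proof (rule sum.cong[OF refl])
    fix v
    have "Q (u + (j + int v * int d)) = Q (u + j)" by (rule Q_cong) simp
    then show "emb (Q (u + (j + int v * int d))) * F u (j + int v * int d) = emb (Q (u + j)) * F u (j + int v * int d)"
      by simp
  qed
  also have "\<dots> = emb (Q (u + j)) * Eidj n d q emb G e u j" by (simp add: Eidj_F sum_distrib_left)
  finally show ?thesis .
qed

lemma C4b: "Eidj n d q emb G e u j * G = G * Eidj n d q emb G e u j"
  by (simp add: Eidj_F sum_distrib_left sum_distrib_right FG)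

lemma C5: "X * Eidj n d q emb G e u j = Eidj n d q emb G e u (j - 1) * X"
proof -
  have "X * Eidj n d q emb G e u j = (\<Sum>v<n div d. F u (j + int v * int d - 1) * X)"
    by (simp add: Eidj_F sum_distrib_left XF)
  also have "\<dots> = (\<Sum>v<n div d. F u (j - 1 + int v * int d) * X)"
    by (simp add: algebra_simps)
  also have "\<dots> = Eidj n d q emb G e u (j - 1) * X" by (simp add: Eidj_F sum_distrib_right)
  finally show ?thesis .
qed

end


context dd begin
lemma C6:
  assumes md: "m < d"
  shows "gam a e l m * Eidj n d q emb G e u j
          = (if l mod int d = j mod int d
             then Eidj n d q emb G e u (j + int m) * gam a e l m else 0)"
proof -
  let ?T = "\<lambda>v. if (j + int v * int d) mod int n = l mod int n then P u (j + int v * int d + int m) * gam a e l m else 0"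
  have L: "gam a e l m * Eidj n d q emb G e u j = (\<Sum>v<n div d. ?T v)"
    unfolding Eidj_F sum_distrib_left by (intro sum.cong refl) (simp only: gamF[OF md])
  have R: "Eidj n d q emb G e u (j + int m) * gam a e l m = (\<Sum>v<n div d. ?T v)"
  proof -
    have "Eidj n d q emb G e u (j + int m) * gam a e l m
        = (\<Sum>v<n div d. F u (j + int m + int v * int d) * gam a e l m)"
      by (simp add: Eidj_F sum_distrib_right)
    also have "\<dots> = (\<Sum>v<n div d. ?T v)"
    proof (rule sum.cong[OF refl])
      fix v
      have c: "((j + int m + int v * int d) mod int n = (l + int m) mod int n)
          = ((j + int v * int d) mod int n = l mod int n)"
      proof -
        have "j + int m + int v * int d - (l + int m) = j + int v * int d - l" by simp
        then show ?thesis by (simp only: mod_eq_dvd_iff)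
      qed
      have p: "j + int m + int v * int d = j + int v * int d + int m" by simp
      show "F u (j + int m + int v * int d) * gam a e l m = ?T v"
        by (simp only: Fgam c) (simp only: p)
    qed
    finally show ?thesis .
  qed
  show ?thesis
  proof (cases "l mod int d = j mod int d")
    case True then show ?thesis by (simp only: L R if_True simp_thms)
  next
    case False
    have "?T v = 0" for v
    proof (rule ccontr)
      assume "?T v \<noteq> 0"
      then have "(j + int v * int d) mod int n = l mod int n" by (auto split: if_splits)
      then have "int d dvd (j + int v * int d) - l" by (rule dvd_n_d)
      then have "(j + int v * int d) mod int d = l mod int d" by (simp only: mod_eq_dvd_iff)
      then show False using False by simp
    qed
    then have "gam a e l m * Eidj n d q emb G e u j = 0" by (simp only: L sum.neutral_const)
    then show ?thesis using False by simp
  qed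
qed

end

theorem mainTheorem3:
  fixes n d :: nat and q :: "'k::alg_closed_field" and emb :: "'k \<Rightarrow> 'a::ring_1"
    and G X :: 'a and e a :: "int \<Rightarrow> 'a"
  assumes "d \<ge> 2" and "d dvd n" and "of_nat n \<noteq> (0::'k)"
    and "q ^ d = 1" and "\<forall>m. 0 < m \<and> m < d \<longrightarrow> q ^ m \<noteq> 1"
    and "is_DD n d q emb G X e a"
  shows
    "(\<forall>u j l. 0 \<le> j \<and> j < int d \<and> 0 \<le> l \<and> l < int d \<longrightarrow>
        Eidj n d q emb G e u j * Eidj n d q emb G e u l
          = (if j = l then Eidj n d q emb G e u j else 0))
   \<and> (\<forall>u. (\<Sum>j<d. Eidj n d q emb G e u (int j)) = Eid n d q emb G e u)
   \<and> (\<forall>u j j'. Eidj n d q emb G e u j = Eidj n d q emb G e u j' \<longleftrightarrow> j mod int d = j' mod int d)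
   \<and> (\<forall>u j. G * Eidj n d q emb G e u j = emb (qp d q (u + j)) * Eidj n d q emb G e u j
        \<and> emb (qp d q (u + j)) * Eidj n d q emb G e u j = Eidj n d q emb G e u j * G)
   \<and> (\<forall>u j. X * Eidj n d q emb G e u j = Eidj n d q emb G e u (j - 1) * X)
   \<and> (\<forall>u j l m. m < d \<longrightarrow>
        gam a e l m * Eidj n d q emb G e u j
          = (if l mod int d = j mod int d
             then Eidj n d q emb G e u (j + int m) * gam a e l m else 0))"
proof -
  have D: "is_DD n d q emb G X e a" by (rule assms(6))
  have "dd n d q emb G X e a"
    using assms(1-4) D unfolding dd_def is_DD_def Let_def by blast
  then interpret dd n d q emb G X e a .
  show ?thesis
    apply (intro conjI allI impI)
    subgoal using C1 by auto
    subgoal by (rule C2)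
    subgoal using C3_if C3_onlyif by blast
    subgoal by (rule C4a)
    subgoal by (simp only: C4a[symmetric] C4b)
    subgoal by (rule C5)
    subgoal by (rule C6)
    done
qed

end
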